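(* Let $s=e^{2\pi i\theta}$ with $\theta$ irrational, let $\varepsilon>0$ and let $m$ be a positive integer. Then there exists $\delta>0$ such that for every $a$ with $|a|<1$ and $|s-a|<\delta$ we have $|Q_a^i(c_a)|>1-\varepsilon$ for all $i=0,1,\dots,m$.
   Context: For $|a|<1$, $Q_a(z)=z\frac{a-z}{1-\overline a z}$, and $c_a=\frac{a}{1+\sqrt{1-|a|^2}}$ is the unique critical point of $Q_a$ in the open unit disk. $Q_a^i$ denotes the $i$-th iterate. *)

theory Defs
  imports "HOL-Analysis.Analysis"
begin

definition Qmap :: "complex \<Rightarrow> complex \<Rightarrow> complex" where
  "Qmap a z = z * (a - z) / (1 - cnj a * z)"

text \<open>The critical point c_a = a / (1 + sqrt(1 - |a|^2)) of Q_a in the unit disk.\<close>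
definition crit :: "complex \<Rightarrow> complex" where
  "crit a = a / (1 + complex_of_real (sqrt (1 - (cmod a)^2)))"

end

theory Submission
  imports Defs
begin

lemma Q_crit:
  assumes "cmod a < 1"
  shows "Qmap a (crit a) = (crit a)^2"
proof -
  define w where "w = sqrt (1 - (cmod a)^2)"
  have lt: "(cmod a)^2 < 1" using assms
    by (simp add: power_less_one_iff)
  have w0: "w > 0" unfolding w_def using lt by simp
  have w2: "w^2 = 1 - (cmod a)^2" unfolding w_def using lt by simp
  have aa0: "cnj a * a = of_real ((cmod a)^2)"
    using complex_norm_square[of a] by (simp add: mult.commute)
  have aa: "cnj a * a = 1 - of_real w ^ 2"
  proof -
    have "(cmod a)^2 = 1 - w^2" using w2 by simp
    thus ?thesis unfolding aa0 by simp
  qed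
  have "Re (1 + complex_of_real w) > 0" using w0 by simp
  hence ne: "1 + complex_of_real w \<noteq> 0" by (metis less_irrefl zero_complex.sel(1))
  have c: "crit a = a / (1 + of_real w)" unfolding crit_def w_def by simp
  have den: "1 - cnj a * crit a = of_real w"
  proof -
    have "1 - cnj a * crit a = 1 - (cnj a * a) / (1 + of_real w)" by (simp add: c)
    also have "\<dots> = ((1 + of_real w) - cnj a * a) / (1 + of_real w)"
      using ne by (simp add: field_simps)
    also have "\<dots> = ((1 + of_real w) - (1 - of_real w ^ 2)) / (1 + of_real w)"
      by (simp only: aa)
    also have "\<dots> = of_real w" using ne by (simp add: field_simps power2_eq_square)
    finally show ?thesis .
  qed
  have wne: "complex_of_real w \<noteq> 0" using w0 by simp
  have num: "a - crit a = crit a - cnj a * (crit a)^2"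
  proof -
    have "crit a - cnj a * (crit a)^2 = crit a * (1 - cnj a * crit a)"
      by (simp add: algebra_simps power2_eq_square)
    also have "\<dots> = a * of_real w / (1 + of_real w)" unfolding den by (simp add: c)
    also have "\<dots> = a - crit a" using ne by (simp add: c field_simps)
    finally show ?thesis by simp
  qed
  have "Qmap a (crit a) = crit a * (a - crit a) / (1 - cnj a * crit a)"
    by (simp add: Qmap_def)
  also have "\<dots> = crit a * (crit a * (1 - cnj a * crit a)) / (1 - cnj a * crit a)"
    by (simp add: num algebra_simps power2_eq_square)
  also have "\<dots> = (crit a)^2" using den wne by (simp add: power2_eq_square)
  finally show ?thesis .
qed

theorem lemma4p5:
  fixes \<theta> :: real and \<epsilon> :: real and m :: nat
  assumes "\<theta> \<notin> \<rat>" and "\<epsilon> > 0" and "m > 0"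
  defines "s \<equiv> exp (2 * of_real pi * \<i> * of_real \<theta>)"
  shows "\<exists>\<delta>>0. \<forall>a. cmod a < 1 \<and> cmod (s - a) < \<delta> \<longrightarrow>
           (\<forall>i\<le>m. cmod ((Qmap a ^^ i) (crit a)) > 1 - \<epsilon>)"
proof -
  have ns: "cmod s = 1" unfolding s_def by (simp add: norm_exp_eq_Re)
  have spow: "s ^ k \<noteq> 1" if "k > 0" for k :: nat
  proof
    assume "s ^ k = 1"
    hence "exp (of_nat k * (2 * of_real pi * \<i> * of_real \<theta>)) = 1"
      unfolding s_def by (simp add: exp_of_nat_mult)
    then obtain n :: int where "Im (of_nat k * (2 * of_real pi * \<i> * of_real \<theta>)) = 2 * pi * n"
      by (auto simp: exp_eq_1)
    hence "k * \<theta> = n" by simp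
    hence "\<theta> = of_int n / of_nat k" using that by (simp add: field_simps)
    hence "\<theta> \<in> \<rat>" by simp
    thus False using assms(1) by simp
  qed
  have cs: "cnj s * s = 1" using ns complex_norm_square[of s]
    by (simp add: mult.commute)
  define F where "F = (\<lambda>i a. (Qmap a ^^ i) (crit a))"
  let ?L = "at s within ball 0 1"
  have critlim: "(crit \<longlongrightarrow> s) ?L"
  proof -
    have "((\<lambda>a. a / (1 + complex_of_real (sqrt (1 - (cmod a)^2)))) \<longlongrightarrow>
          s / (1 + complex_of_real (sqrt (1 - (cmod s)^2)))) ?L"
      by (intro tendsto_intros) (simp_all add: ns)
    thus ?thesis unfolding crit_def[abs_def] by (simp add: ns)
  qed
  have lim: "(F i \<longlongrightarrow> s ^ (i+1)) ?L" for i
  proof (induction i)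
    case 0 thus ?case using critlim by (simp add: F_def)
  next
    case (Suc i)
    show ?case
    proof (cases i)
      case 0
      have ev: "\<forall>\<^sub>F a in ?L. (crit a)^2 = F (Suc i) a"
        unfolding eventually_at_filter F_def 0 by (intro always_eventually) (simp add: Q_crit)
      have "((\<lambda>a. (crit a)^2) \<longlongrightarrow> s^2) ?L" by (intro tendsto_intros critlim)
      from Lim_transform_eventually[OF this ev] show ?thesis using 0 by (simp add: power2_eq_square)
    next
      case (Suc j)
      have eq: "F (Suc i) = (\<lambda>a. F i a * (a - F i a) / (1 - cnj a * F i a))"
        by (simp add: F_def Qmap_def fun_eq_iff)
      have d: "1 - cnj s * s ^ (i+1) \<noteq> 0"
      proof -
        have "cnj s * s ^ (i+1) = (cnj s * s) * s ^ i"
          by (simp only: Suc_eq_plus1[symmetric] power_Suc mult.assoc)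
        hence "cnj s * s ^ (i+1) = s ^ i" by (simp only: cs mult_1_left)
        moreover have "s ^ i \<noteq> 1" using spow[of i] \<open>i = Suc j\<close> by blast
        ultimately show ?thesis by (metis right_minus_eq)
      qed
      have "((\<lambda>a. F i a * (a - F i a) / (1 - cnj a * F i a)) \<longlongrightarrow>
             s^(i+1) * (s - s^(i+1)) / (1 - cnj s * s^(i+1))) ?L"
        by (intro tendsto_intros Suc.IH d)
      moreover have "s^(i+1) * (s - s^(i+1)) / (1 - cnj s * s^(i+1)) = s^(Suc i + 1)"
      proof -
        have "cnj s * s ^ (i+1) = (cnj s * s) * s ^ i"
          by (simp only: Suc_eq_plus1[symmetric] power_Suc mult.assoc)
        hence "s - s^(i+1) = s * (1 - cnj s * s^(i+1))" using cs
          by (simp add: algebra_simps)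
        thus ?thesis using d by simp
      qed
      ultimately show ?thesis by (simp add: eq)
    qed
  qed
  have ev: "\<forall>\<^sub>F a in ?L. cmod (F i a) > 1 - \<epsilon>" for i
  proof -
    have "((\<lambda>a. cmod (F i a)) \<longlongrightarrow> cmod (s^(i+1))) ?L" by (intro tendsto_intros lim)
    moreover have "cmod (s^(i+1)) = 1" by (simp only: norm_power ns power_one)
    ultimately show ?thesis using assms(2) by (simp add: order_tendstoD)
  qed
  have "\<forall>\<^sub>F a in ?L. \<forall>i\<in>{..m}. cmod (F i a) > 1 - \<epsilon>"
    using ev by (simp add: eventually_ball_finite)
  then obtain d where d: "d > 0" and H: "\<And>a. a \<in> ball 0 1 \<Longrightarrow> a \<noteq> s \<Longrightarrow> dist a s < d \<Longrightarrow>
      (\<forall>i\<in>{..m}. cmod (F i a) > 1 - \<epsilon>)"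
    unfolding eventually_at by blast
  show ?thesis
  proof (intro exI[of _ d] conjI allI impI d)
    fix a i assume a: "cmod a < 1 \<and> cmod (s - a) < d" and i: "i \<le> m"
    have "a \<noteq> s" using a ns by auto
    with a H[of a] i show "cmod ((Qmap a ^^ i) (crit a)) > 1 - \<epsilon>"
      by (auto simp: F_def dist_norm norm_minus_commute)
  qed
qed

end
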